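(* Consider the protocol $P_{RL}$ with parameter $N$ on a directed ring of size $n$ with $2\le n\le N$. The set $\mathcal{C}_{PB}$ of configurations (defined in the context) is closed: no configuration outside $\mathcal{C}_{PB}$ is reachable from a configuration in $\mathcal{C}_{PB}$.
   Context: Model. A population is a directed ring of $n\ge 2$ anonymous agents $u_0,\dots,u_{n-1}$ (indices modulo $n$) with arcs $e_i=(u_i,u_{i+1})$. A configuration $C$ assigns a state to each agent; $C\to C'$ means that $C'$ is obtained from $C$ by one interaction on some arc $e_i$, in which initiator $u_i$ and responder $u_{i+1}$ update their states by the transition function and all other agents keep their states. A configuration is reachable from $C$ if it is obtained from $C$ by finitely many such steps. Protocol $P_{RL}$ (parameter $N$). Each agent has variables $\mathit{leader}\in\{0,1\}$, $\mathit{bullet}\in\{0,1,2\}$, $\mathit{shield}\in\{0,1\}$, $\mathit{signal}\in\{0,1\}$, $\mathit{dist}\in\{0,\dots,N\}$. In an interaction with initiator $l$ and responder $r$ the following are executed in order: 1. If $l.\mathit{leader}=1$ then $l.\mathit{dist}\gets 0$. 2. If $r.\mathit{leader}=1$ then $r.\mathit{dist}\gets 0$; else if $r.\mathit{bullet}=0$ then $r.\mathit{dist}\gets\min(l.\mathit{dist}+1,N)$. 3. If $r.\mathit{dist}=N$ then $r.\mathit{leader}\gets1$, $r.\mathit{bullet}\gets2$, $r.\mathit{shield}\gets1$, $r.\mathit{signal}\gets0$, $r.\mathit{dist}\gets0$. 4. If $l.\mathit{leader}=1$ and $l.\mathit{signal}=1$ then $l.\mathit{bullet}\gets2$, $l.\mathit{shield}\gets1$,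 $l.\mathit{signal}\gets0$. 5. If $r.\mathit{leader}=1$ and $r.\mathit{signal}=1$ then $r.\mathit{bullet}\gets1$, $r.\mathit{shield}\gets0$, $r.\mathit{signal}\gets0$. 6. If $l.\mathit{bullet}>0$ and $r.\mathit{leader}=1$: set $r.\mathit{leader}\gets0$ if ($l.\mathit{bullet}=2$ and $r.\mathit{shield}=0$); then $l.\mathit{bullet}\gets0$. Else, if $l.\mathit{bullet}>0$ and $r.\mathit{leader}=0$: if $r.\mathit{bullet}=0$ then $r.\mathit{bullet}\gets l.\mathit{bullet}$; then $l.\mathit{bullet}\gets0$ and $r.\mathit{signal}\gets0$. 7. $l.\mathit{signal}\gets\max(l.\mathit{signal},r.\mathit{signal},r.\mathit{leader})$. An agent is a leader if $\mathit{leader}=1$ and a follower otherwise. Definitions. In a configuration with at least one leader, $\mathrm{dist}_L(i)=\min\{j\ge0: u_{i-j}.\mathit{leader}=1\}$. The predicate $\mathrm{peaceful}(i)$ holds iff $u_{i-\mathrm{dist}_L(i)}.\mathit{shield}=1$ and $u_{i-j}.\mathit{signal}=0$ for all $j=0,1,\dots,\mathrm{dist}_L(i)$. $\mathcal{C}_{PB}$ is the set of configurations in which at least one agent is a leader and every agent $u_j$ with $u_j.\mathit{bullet}=2$ satisfies $\mathrm{peaceful}(j)$. *)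

theory Defs
  imports Main
begin

text \<open>The 0/1 variables leader, shield, signal are
  rendered as bool (1 = True); bullet ranges over 0..2 and dist over 0..N (nat, with
  the range constraint imposed by valid_config).\<close>

record agent =
  leader :: bool
  bullet :: nat
  shield :: bool
  signal :: bool
  dist   :: nat

text \<open>Transition function: initiator l, responder r; steps 1-7 executed in order.\<close>

definition delta :: "nat \<Rightarrow> agent \<Rightarrow> agent \<Rightarrow> agent \<times> agent" where
  "delta N l r = (
     let l1 = (if leader l then l\<lparr>dist := 0\<rparr> else l);
         r1 = (if leader r then r\<lparr>dist := 0\<rparr>
               else if bullet r = 0 then r\<lparr>dist := min (dist l1 + 1) N\<rparr> else r);
         r2 = (if dist r1 = N
               then r1\<lparr>leader := True, bullet := 2, shield := True, signal := False, dist := 0\<rparr>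
               else r1);
         l2 = (if leader l1 \<and> signal l1
               then l1\<lparr>bullet := 2, shield := True, signal := False\<rparr> else l1);
         r3 = (if leader r2 \<and> signal r2
               then r2\<lparr>bullet := 1, shield := False, signal := False\<rparr> else r2);
         (l3, r4) =
           (if bullet l2 > 0 \<and> leader r3 then
              (l2\<lparr>bullet := 0\<rparr>,
               (if bullet l2 = 2 \<and> \<not> shield r3 then r3\<lparr>leader := False\<rparr> else r3))
            else if bullet l2 > 0 \<and> \<not> leader r3 then
              (l2\<lparr>bullet := 0\<rparr>,
               (if bullet r3 = 0 then r3\<lparr>bullet := bullet l2\<rparr> else r3)\<lparr>signal := False\<rparr>)
            else (l2, r3));
         l4 = l3\<lparr>signal := (signal l3 \<or> signal r4 \<or> leader r4)\<rparr>
     in (l4, r4))"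

text \<open>A configuration of a ring of size n: agent u_i is C i for i < n
  (values at indices \<ge> n are irrelevant and never touched).\<close>

type_synonym config = "nat \<Rightarrow> agent"

definition valid_config :: "nat \<Rightarrow> nat \<Rightarrow> config \<Rightarrow> bool" where
  "valid_config N n C \<longleftrightarrow> (\<forall>i<n. bullet (C i) \<le> 2 \<and> dist (C i) \<le> N)"

definition step :: "nat \<Rightarrow> nat \<Rightarrow> config \<Rightarrow> config \<Rightarrow> bool" where
  "step N n C C' \<longleftrightarrow> (\<exists>i<n.
     C' = C(i := fst (delta N (C i) (C (Suc i mod n))),
            Suc i mod n := snd (delta N (C i) (C (Suc i mod n)))))"

definition reachable :: "nat \<Rightarrow> nat \<Rightarrow> config \<Rightarrow> config \<Rightarrow> bool" where
  "reachable N n = (step N n)\<^sup>*\<^sup>*"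

definition at :: "nat \<Rightarrow> config \<Rightarrow> int \<Rightarrow> agent" where
  "at n C k = C (nat (k mod int n))"

definition distL :: "nat \<Rightarrow> config \<Rightarrow> nat \<Rightarrow> nat" where
  "distL n C i = (LEAST j. leader (at n C (int i - int j)))"

definition peaceful :: "nat \<Rightarrow> config \<Rightarrow> nat \<Rightarrow> bool" where
  "peaceful n C i \<longleftrightarrow>
     shield (at n C (int i - int (distL n C i))) \<and>
     (\<forall>j \<le> distL n C i. \<not> signal (at n C (int i - int j)))"

definition C_PB :: "nat \<Rightarrow> config set" where
  "C_PB n = {C. (\<exists>i<n. leader (C i)) \<and>
                (\<forall>j<n. bullet (C j) = 2 \<longrightarrow> peaceful n C j)}"

end

theory Submission
  imports Defs
begin

lemma d_facts:
  assumes "delta N l r = (L, R)"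
  shows "leader L = leader l" "signal R \<Longrightarrow> signal r" "shield l \<Longrightarrow> shield L"
    "signal L \<Longrightarrow> signal l \<or> signal R \<or> leader R" "bullet L = 0"
  using assms unfolding delta_def Let_def
  by (auto split: if_splits prod.splits)

lemma d_keep:
  assumes "delta N l r = (L, R)" "\<not> signal r" "leader r \<Longrightarrow> shield r" "leader R"
  shows "shield R"
  using assms unfolding delta_def Let_def
  by (auto split: if_splits prod.splits)

lemma d_keep2:
  assumes "delta N l r = (L, R)" "\<not> signal r" "leader r" "shield r"
  shows "leader R"
  using assms unfolding delta_def Let_def
  by (auto split: if_splits prod.splits)

lemma d_kill:
  assumes "delta N l r = (L, R)" "leader r" "\<not> leader R"
  shows "leader l \<or> (bullet l = 2 \<and> \<not> (\<not> signal r \<and> shield r))"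
  using assms unfolding delta_def Let_def
  by (auto split: if_splits prod.splits)

lemma d_b2:
  assumes "delta N l r = (L, R)" "bullet R = 2"
  shows "(leader R \<and> shield R \<and> \<not> signal R) \<or> bullet r = 2 \<or>
         (\<not> leader R \<and> \<not> signal R \<and> (bullet l = 2 \<or> (leader L \<and> shield L \<and> \<not> signal L)))"
  using assms unfolding delta_def Let_def
  by (auto split: if_splits prod.splits)



fun good :: "nat \<Rightarrow> config \<Rightarrow> int \<Rightarrow> nat \<Rightarrow> bool" where
  "good n C x 0 = False"
| "good n C x (Suc m) = (\<not> signal (at n C x) \<and>
     (if leader (at n C x) then shield (at n C x) else good n C (x - 1) m))"

lemma good_char:
  assumes "leader (at n C (x - int d))" "\<forall>k<d. \<not> leader (at n C (x - int k))"
  shows "good n C x m \<longleftrightarrow> (d < m \<and> shield (at n C (x - int d)) \<and>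
           (\<forall>k\<le>d. \<not> signal (at n C (x - int k))))"
  using assms
proof (induction d arbitrary: x m)
  case 0
  then show ?case by (cases m) auto
next
  case (Suc d)
  have nl: "\<not> leader (at n C x)" using Suc.prems(2)[rule_format, of 0] by simp
  have h1: "leader (at n C (x - 1 - int d))" using Suc.prems(1) by (simp add: algebra_simps)
  have h2: "\<forall>k<d. \<not> leader (at n C (x - 1 - int k))"
  proof (intro allI impI)
    fix k assume "k < d"
    then have "Suc k < Suc d" by simp
    then have "\<not> leader (at n C (x - int (Suc k)))" using Suc.prems(2) by blast
    then show "\<not> leader (at n C (x - 1 - int k))" by (simp add: algebra_simps)
  qed
  note IH = Suc.IH[OF h1 h2]
  have eqk: "(\<forall>k\<le>Suc d. \<not> signal (at n C (x - int k))) \<longleftrightarrow>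
        \<not> signal (at n C x) \<and> (\<forall>k\<le>d. \<not> signal (at n C (x - 1 - int k)))"
  proof
    assume A: "\<forall>k\<le>Suc d. \<not> signal (at n C (x - int k))"
    show "\<not> signal (at n C x) \<and> (\<forall>k\<le>d. \<not> signal (at n C (x - 1 - int k)))"
    proof
      show "\<not> signal (at n C x)" using A[rule_format, of 0] by simp
      show "\<forall>k\<le>d. \<not> signal (at n C (x - 1 - int k))"
      proof (intro allI impI)
        fix k assume "k \<le> d"
        then have "Suc k \<le> Suc d" by simp
        then have "\<not> signal (at n C (x - int (Suc k)))" using A by blast
        then show "\<not> signal (at n C (x - 1 - int k))" by (simp add: algebra_simps)
      qed
    qed
  next
    assume B: "\<not> signal (at n C x) \<and> (\<forall>k\<le>d. \<not> signal (at n C (x - 1 - int k)))"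
    show "\<forall>k\<le>Suc d. \<not> signal (at n C (x - int k))"
    proof (intro allI impI)
      fix k assume k: "k \<le> Suc d"
      show "\<not> signal (at n C (x - int k))"
      proof (cases k)
        case 0 then show ?thesis using B by simp
      next
        case (Suc k')
        then have "\<not> signal (at n C (x - 1 - int k'))" using B k by simp
        then show ?thesis using Suc by (simp add: algebra_simps)
      qed
    qed
  qed
  have sh: "shield (at n C (x - int (Suc d))) = shield (at n C (x - 1 - int d))"
    by (simp add: algebra_simps)
  show ?case
  proof (cases m)
    case 0 then show ?thesis by simp
  next
    case (Suc m')
    show ?thesis using IH nl eqk sh Suc by auto
  qed
qed

lemma leader_ex_at:
  assumes "p < n" "leader (C p)"
  shows "\<exists>j. leader (at n C (int i - int j))"
proof -
  have n0: "n > 0" using assms by simp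
  define j where "j = nat ((int i - int p) mod int n)"
  have "(int i - int j) mod int n = int p"
  proof -
    have "int j = (int i - int p) mod int n" unfolding j_def using n0 by simp
    then have "(int i - int j) mod int n = (int i - (int i - int p)) mod int n"
      by (simp add: mod_diff_right_eq)
    also have "\<dots> = int p" using assms by simp
    finally show ?thesis .
  qed
  then have "at n C (int i - int j) = C p" unfolding at_def by simp
  then show ?thesis using assms by metis
qed

lemma peaceful_good:
  assumes "p < n" "leader (C p)"
  shows "peaceful n C i \<longleftrightarrow> (\<exists>m. good n C (int i) m)"
proof -
  define D where "D = distL n C i"
  obtain j where j: "leader (at n C (int i - int j))" using leader_ex_at assms by blast
  have L1: "leader (at n C (int i - int D))" unfolding D_def distL_def
    by (rule LeastI[of _ j]) (rule j)
  have L2: "\<forall>k<D. \<not> leader (at n C (int i - int k))" unfolding D_def distL_def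
    using not_less_Least by blast
  note gc = good_char[OF L1 L2]
  show ?thesis unfolding peaceful_def D_def[symmetric] using gc by auto
qed



lemma at_upd:
  assumes "n > 0"
  shows "at n (C(a := L, b := R)) x =
    (if x mod int n = int b then R else if x mod int n = int a then L else at n C x)"
proof -
  have nn: "x mod int n \<ge> 0" using assms by simp
  have "nat (x mod int n) = b \<longleftrightarrow> x mod int n = int b" using nn by auto
  moreover have "nat (x mod int n) = a \<longleftrightarrow> x mod int n = int a" using nn by auto
  ultimately show ?thesis unfolding at_def by auto
qed

lemma at_nat: "k < n \<Longrightarrow> at n C (int k) = C k"
  unfolding at_def by (simp add: zmod_int)

lemma mod_pred:
  assumes "(x - 1) mod int n = int a"
  shows "x mod int n = int (Suc a mod n)"
proof -
  have "x mod int n = ((x - 1) + 1) mod int n" by simp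
  also have "\<dots> = ((x - 1) mod int n + 1) mod int n" by (simp add: mod_add_left_eq)
  also have "\<dots> = (int a + 1) mod int n" using assms by simp
  also have "\<dots> = int (Suc a mod n)" by (simp add: zmod_int add.commute)
  finally show ?thesis .
qed

lemma mod_succ_pred:
  assumes "a < n"
  shows "(int (Suc a mod n) - 1) mod int n = int a"
proof -
  have "(int (Suc a mod n) - 1) mod int n = ((int (Suc a) mod int n) - 1) mod int n"
    by (simp add: zmod_int)
  also have "\<dots> = (int (Suc a) - 1) mod int n" by (simp add: mod_diff_left_eq)
  also have "\<dots> = int a" using assms by simp
  finally show ?thesis .
qed

lemma good_mod:
  "x mod int n = y mod int n \<Longrightarrow> good n C x m = good n C y m"
proof (induction m arbitrary: x y)
  case 0 then show ?case by simp
next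
  case (Suc m)
  have a: "at n C x = at n C y" unfolding at_def using Suc.prems by simp
  have "(x - 1) mod int n = (y - 1) mod int n" using Suc.prems by (metis mod_diff_left_eq)
  then have "good n C (x - 1) m = good n C (y - 1) m" by (rule Suc.IH)
  then show ?case using a by simp
qed

lemma good_witness:
  "good n C x m \<Longrightarrow> \<exists>y. leader (at n C y) \<and> shield (at n C y) \<and> \<not> signal (at n C y)"
  by (induction m arbitrary: x) (auto split: if_splits)



lemma lemG:
  assumes n2: "2 \<le> n" and a: "a < n" and b: "b = Suc a mod n"
    and d: "delta N (C a) (C b) = (L, R)" and C': "C' = C(a := L, b := R)"
  shows "(x mod int n \<noteq> int a \<or> (\<not> leader R \<and> \<not> signal R)) \<Longrightarrow>
         good n C x m \<Longrightarrow> good n C' x m"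
proof (induction m arbitrary: x)
  case 0 then show ?case by simp
next
  case (Suc m)
  have n0: "n > 0" using n2 by simp
  have bn: "b < n" using b n0 by simp
  have ab: "a \<noteq> b"
  proof (cases "Suc a < n")
    case True then show ?thesis using b by simp
  next
    case False then have "Suc a = n" using a by simp
    then show ?thesis using b n2 by auto
  qed
  have atC': "at n C' x = (if x mod int n = int b then R else if x mod int n = int a then L else at n C x)"
    unfolding C' by (rule at_upd[OF n0])
  show ?case
  proof (cases "x mod int n = int b")
    case True
    then have ax: "at n C x = C b" unfolding at_def by simp
    have abx: "x mod int n \<noteq> int a" using True ab by simp
    have g: "\<not> signal (C b)" "leader (C b) \<Longrightarrow> shield (C b)"
      "\<not> leader (C b) \<Longrightarrow> good n C (x - 1) m"
      using Suc.prems(2) ax by (auto split: if_splits)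
    have s1: "\<not> signal R" using d_facts(2)[OF d] g(1) by blast
    show ?thesis
    proof (cases "leader R")
      case True
      then have "shield R" using d_keep[OF d g(1) g(2)] by blast
      then show ?thesis using atC' \<open>x mod int n = int b\<close> s1 True by simp
    next
      case False
      have "\<not> leader (C b)"
      proof
        assume "leader (C b)"
        then have "leader R" using d_keep2[OF d g(1)] g(2) by blast
        then show False using False by simp
      qed
      then have "good n C (x - 1) m" using g(3) by blast
      then have "good n C' (x - 1) m" using Suc.IH False s1 by blast
      then show ?thesis using atC' \<open>x mod int n = int b\<close> s1 False by simp
    qed
  next
    case nb: False
    show ?thesis
    proof (cases "x mod int n = int a")
      case True
      then have E: "\<not> leader R \<and> \<not> signal R" using Suc.prems(1) by blast
      have ax: "at n C x = C a" using True unfolding at_def by simp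
      have g: "\<not> signal (C a)" "leader (C a) \<Longrightarrow> shield (C a)"
        "\<not> leader (C a) \<Longrightarrow> good n C (x - 1) m"
        using Suc.prems(2) ax by (auto split: if_splits)
      have sL: "\<not> signal L" using d_facts(4)[OF d] g(1) E by blast
      have lL: "leader L = leader (C a)" using d_facts(1)[OF d] .
      have shL: "leader L \<Longrightarrow> shield L" using d_facts(3)[OF d] g(2) lL by blast
      have "\<not> leader L \<Longrightarrow> good n C' (x - 1) m" using Suc.IH E g(3) lL by blast
      then show ?thesis using atC' True nb sL shL by auto
    next
      case False
      have eq: "at n C' x = at n C x" using atC' nb False by simp
      have "(x - 1) mod int n \<noteq> int a"
      proof
        assume "(x - 1) mod int n = int a"
        then have "x mod int n = int b" using mod_pred b by blast
        then show False using nb by simp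
      qed
      then have "good n C (x - 1) m \<Longrightarrow> good n C' (x - 1) m" using Suc.IH by blast
      then show ?thesis using Suc.prems(2) eq by (auto split: if_splits)
    qed
  qed
qed


lemma step_pres:
  assumes n2: "2 \<le> n" and CP: "C \<in> C_PB n" and st: "step N n C C'"
  shows "C' \<in> C_PB n"
proof -
  obtain a where a: "a < n" and C'def: "C' = C(a := fst (delta N (C a) (C (Suc a mod n))),
            Suc a mod n := snd (delta N (C a) (C (Suc a mod n))))"
    using st unfolding step_def by blast
  define b where "b = Suc a mod n"
  obtain L R where d: "delta N (C a) (C b) = (L, R)" by (cases "delta N (C a) (C b)")
  have C': "C' = C(a := L, b := R)" using C'def d unfolding b_def by simp
  have n0: "n > 0" using n2 by simp
  have bn: "b < n" using n0 unfolding b_def by simp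
  have ab: "a \<noteq> b"
  proof (cases "Suc a < n")
    case True then show ?thesis unfolding b_def by simp
  next
    case False then have "Suc a = n" using a by simp
    then show ?thesis unfolding b_def using n2 by auto
  qed
  have Ca: "C' a = L" using C' ab by simp
  have Cb: "C' b = R" using C' by simp
  have Co: "\<And>k. k \<noteq> a \<Longrightarrow> k \<noteq> b \<Longrightarrow> C' k = C k" using C' by simp
  obtain p where p: "p < n" "leader (C p)" using CP unfolding C_PB_def by blast
  have bul: "\<And>j. j < n \<Longrightarrow> bullet (C j) = 2 \<Longrightarrow> \<exists>m. good n C (int j) m"
    using CP peaceful_good[of p n C] p unfolding C_PB_def by blast
  note G = lemG[OF n2 a b_def d C']
  have lex: "\<exists>q<n. leader (C' q)"
  proof (cases "p = b")
    case False
    show ?thesis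
    proof (cases "p = a")
      case True then show ?thesis using Ca d_facts(1)[OF d] p a by auto
    next
      case False
      then show ?thesis using Co[OF False \<open>p \<noteq> b\<close>] p by auto
    qed
  next
    case True
    show ?thesis
    proof (cases "leader R")
      case True then show ?thesis using Cb bn by auto
    next
      case nR: False
      have "leader (C a) \<or> (bullet (C a) = 2 \<and> \<not> (\<not> signal (C b) \<and> shield (C b)))"
        using d_kill[OF d] p True nR by blast
      then show ?thesis
      proof
        assume "leader (C a)"
        then show ?thesis using Ca d_facts(1)[OF d] a by auto
      next
        assume h: "bullet (C a) = 2 \<and> \<not> (\<not> signal (C b) \<and> shield (C b))"
        then obtain m where "good n C (int a) m" using bul a by blast
        then obtain y where y: "leader (at n C y)" "shield (at n C y)" "\<not> signal (at n C y)"
          using good_witness by blast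
        define q where "q = nat (y mod int n)"
        have qn: "q < n" unfolding q_def using n0
          by (simp add: nat_less_iff)
        have Cq: "C q = at n C y" unfolding q_def at_def by simp
        have "q \<noteq> b" using h y Cq by auto
        show ?thesis
        proof (cases "q = a")
          case True then show ?thesis using Ca d_facts(1)[OF d] a y Cq by auto
        next
          case False then show ?thesis using Co[OF False \<open>q \<noteq> b\<close>] y Cq qn by auto
        qed
      qed
    qed
  qed
  then obtain p' where p': "p' < n" "leader (C' p')" by blast
  have "\<forall>j<n. bullet (C' j) = 2 \<longrightarrow> peaceful n C' j"
  proof (intro allI impI)
    fix j assume jn: "j < n" and bj: "bullet (C' j) = 2"
    have "\<exists>m. good n C' (int j) m"
    proof (cases "j = a")
      case True then show ?thesis using bj Ca d_facts(5)[OF d] by simp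
    next
      case nja: False
      have jmod: "int j mod int n \<noteq> int a" using jn nja by (simp add: zmod_int)
      show ?thesis
      proof (cases "j = b")
        case False
        then have "bullet (C j) = 2" using Co[OF nja False] bj by simp
        then obtain m where "good n C (int j) m" using bul jn by blast
        then show ?thesis using G jmod by blast
      next
        case True
        then have bR: "bullet R = 2" using bj Cb by simp
        have atb: "at n C' (int b) = R" using Cb bn by (simp add: at_nat)
        have ata: "at n C' (int b - 1) = L"
          using Ca mod_succ_pred[OF a] unfolding at_def b_def by simp
        have "(leader R \<and> shield R \<and> \<not> signal R) \<or> bullet (C b) = 2 \<or>
         (\<not> leader R \<and> \<not> signal R \<and> (bullet (C a) = 2 \<or> (leader L \<and> shield L \<and> \<not> signal L)))"
          using d_b2[OF d bR] .
        then show ?thesis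
        proof (elim disjE conjE)
          assume "leader R" "shield R" "\<not> signal R"
          then have "good n C' (int b) 1" using atb by simp
          then show ?thesis using True by blast
        next
          assume "bullet (C b) = 2"
          then obtain m where "good n C (int b) m" using bul bn by blast
          then show ?thesis using G jmod True by blast
        next
          assume nl: "\<not> leader R" and ns: "\<not> signal R" and "bullet (C a) = 2"
          then obtain m where "good n C (int a) m" using bul a by blast
          moreover have "int a mod int n = (int b - 1) mod int n"
            using a mod_succ_pred[OF a] unfolding b_def by simp
          ultimately have "good n C (int b - 1) m" using good_mod by blast
          moreover have "(int b - 1) mod int n = int a" using mod_succ_pred[OF a] b_def by simp
          ultimately have "good n C' (int b - 1) m" using G nl ns by blast
          then have "good n C' (int b) (Suc m)" using atb nl ns by simp
          then show ?thesis using True by blast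
        next
          assume nl: "\<not> leader R" and ns: "\<not> signal R" "leader L" "shield L" "\<not> signal L"
          have "good n C' (int b) 2" using atb ata nl ns by (simp add: numeral_2_eq_2)
          then show ?thesis using True by blast
        qed
      qed
    qed
    then show "peaceful n C' j" using peaceful_good[of p' n C'] p' by blast
  qed
  then show ?thesis using lex unfolding C_PB_def by blast
qed

theorem lemma2:
  fixes N n :: nat and C C' :: config
  assumes "2 \<le> n" and "n \<le> N"
    and "valid_config N n C"
    and "C \<in> C_PB n"
    and "reachable N n C C'"
  shows "C' \<in> C_PB n"
  using assms(5,4) unfolding reachable_def
proof (induction rule: rtranclp_induct)
  case base then show ?case by simp
next
  case (step y z) then show ?case using step_pres assms(1) by blast
qed

end
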